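(* Let $\Omega$ be a bounded domain in $\mathbb R^n$, $n\ge3$, and let $(f,\Gamma)$ satisfy the standing structural assumptions. If $0<w\in LSC(\Omega)$ is a viscosity super-solution of $f(\lambda(-A^u))=1$ in $\Omega$ with $w(x)\to+\infty$ as $\mathrm{dist}(x,\partial\Omega)\to0$, and if $\mathbb R^n\setminus\bar\Omega$ contains a ball $B_R(x_0)$, then $w\ge u^{(out)}_{R,x_0}>0$ in $\Omega$.
   Context: Let $n\ge3$. For a positive $C^2$ function $u$, its conformal Hessian is $A^u=-\frac{2}{n-2}u^{-\frac{n+2}{n-2}}\nabla^2u+\frac{2n}{(n-2)^2}u^{-\frac{2n}{n-2}}\nabla u\otimes\nabla u-\frac{2}{(n-2)^2}u^{-\frac{2n}{n-2}}|\nabla u|^2I$, and $\lambda(-A^u)$ is the vector of eigenvalues of $-A^u$. Let $\Gamma_n=\{\mu:\mu_i>0\ \forall i\}$. Standing structural assumptions on $(f,\Gamma)$: $\Gamma\subset\mathbb R^n$ is an open symmetric cone with vertex at the origin, $\Gamma+\Gamma_n\subset\Gamma$; $f\in C^0(\bar\Gamma)$ symmetric, $f>0$ in $\Gamma$, $f=0$ on $\partial\Gamma$, $f(\lambda+\mu)\ge f(\lambda)$ for $\lambda\in\Gamma,\mu\in\Gamma_n$, $f$ homogeneous of some positive degree. Viscosity super-solution: $w\in LSC(\Omega)$ (lower semicontinuous, values in $\mathbb R\cup\{+\infty\}$, $w\not\equiv+\infty$) such that for every $x_0\in\Omega$, $\varphi\in C^2(\Omega)$ with $(w-\varphi)(x_0)=0$,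 $w-\varphi\ge0$ near $x_0$, either $\lambda(-A^\varphi(x_0))\notin\bar\Gamma$ or $f(\lambda(-A^\varphi(x_0)))\le1$. Canonical solutions: there is a unique constant $\alpha=\alpha(f)>0$ such that for all $R>0$, $x_0\in\mathbb R^n$ the function $u^{(out)}_{R,x_0}(x)=\alpha\big(\frac{R}{|x-x_0|^2-R^2}\big)^{\frac{n-2}{2}}$ satisfies $f(\lambda(-A^{u}))=1$ in $\mathbb R^n\setminus\bar B_R(x_0)$ (and $u^{(in)}_{R,x_0}(x)=\alpha\big(\frac{R}{R^2-|x-x_0|^2}\big)^{\frac{n-2}{2}}$ satisfies it in $B_R(x_0)$). *)

theory Defs
  imports "HOL-Analysis.Analysis"
begin

(* Points of R^n are vectors real^'n, n = CARD('n). *)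

definition C2_on :: "(real^'n::finite) set \<Rightarrow> (real^'n \<Rightarrow> real) \<Rightarrow> bool" where
  "C2_on S \<phi> \<longleftrightarrow> (\<exists>D H. (\<forall>x\<in>S. (\<phi> has_derivative (\<lambda>h. D x \<bullet> h)) (at x))
      \<and> (\<forall>x\<in>S. (D has_derivative (\<lambda>h. H x *v h)) (at x))
      \<and> continuous_on S H)"

definition grad :: "(real^'n::finite \<Rightarrow> real) \<Rightarrow> real^'n \<Rightarrow> real^'n" where
  "grad \<phi> x = (\<chi> i. frechet_derivative \<phi> (at x) (axis i 1))"

definition hess :: "(real^'n::finite \<Rightarrow> real) \<Rightarrow> real^'n \<Rightarrow> real^'n^'n" where
  "hess \<phi> x = (\<chi> i j. frechet_derivative (\<lambda>y. grad \<phi> y $ i) (at x) (axis j 1))"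

definition outer :: "real^'n::finite \<Rightarrow> real^'n \<Rightarrow> real^'n^'n" where
  "outer a b = (\<chi> i j. a $ i * b $ j)"

definition confHess :: "(real^'n::finite \<Rightarrow> real) \<Rightarrow> real^'n \<Rightarrow> real^'n^'n" where
  "confHess u x =
     (let n = real CARD('n); v = u x; g = grad u x in
        (- (2 / (n - 2)) * v powr (- (n + 2) / (n - 2))) *\<^sub>R hess u x
      + ((2 * n / (n - 2)^2) * v powr (- 2 * n / (n - 2))) *\<^sub>R outer g g
      - ((2 / (n - 2)^2) * v powr (- 2 * n / (n - 2)) * (norm g)^2) *\<^sub>R mat 1)"

definition diag_mat :: "real^'n::finite \<Rightarrow> real^'n^'n" where
  "diag_mat \<mu> = (\<chi> i j. if i = j then \<mu> $ i else 0)"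

(* vector of eigenvalues of a symmetric matrix (ordering immaterial, f and \<Gamma> are symmetric) *)
definition eigvals :: "real^'n::finite^'n \<Rightarrow> real^'n" where
  "eigvals M = (SOME \<mu>. \<exists>P. orthogonal_matrix P \<and> M = transpose P ** diag_mat \<mu> ** P)"

definition pos_cone :: "(real^'n::finite) set" where
  "pos_cone = {\<mu>. \<forall>i. \<mu> $ i > 0}"

definition permute_vec :: "('n::finite \<Rightarrow> 'n) \<Rightarrow> real^'n \<Rightarrow> real^'n" where
  "permute_vec p \<mu> = (\<chi> i. \<mu> $ p i)"

definition structural :: "(real^'n::finite \<Rightarrow> real) \<Rightarrow> (real^'n) set \<Rightarrow> bool" where
  "structural f \<Gamma> \<longleftrightarrow>
     open \<Gamma> \<and> \<Gamma> \<noteq> {}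
   \<and> (\<forall>\<mu>\<in>\<Gamma>. \<forall>t>0. t *\<^sub>R \<mu> \<in> \<Gamma>)
   \<and> (\<forall>p \<mu>. p permutes UNIV \<and> \<mu> \<in> \<Gamma> \<longrightarrow> permute_vec p \<mu> \<in> \<Gamma>)
   \<and> (\<forall>\<mu>\<in>\<Gamma>. \<forall>\<nu>\<in>pos_cone. \<mu> + \<nu> \<in> \<Gamma>)
   \<and> continuous_on (closure \<Gamma>) f
   \<and> (\<forall>p \<mu>. p permutes UNIV \<and> \<mu> \<in> closure \<Gamma> \<longrightarrow> f (permute_vec p \<mu>) = f \<mu>)
   \<and> (\<forall>\<mu>\<in>\<Gamma>. f \<mu> > 0)
   \<and> (\<forall>\<mu>\<in>frontier \<Gamma>. f \<mu> = 0)
   \<and> (\<forall>\<mu>\<in>\<Gamma>. \<forall>\<nu>\<in>pos_cone. f (\<mu> + \<nu>) \<ge> f \<mu>)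
   \<and> (\<exists>d>0. \<forall>\<mu>\<in>closure \<Gamma>. \<forall>t>0. f (t *\<^sub>R \<mu>) = t powr d * f \<mu>)"

definition lsc_on :: "(real^'n::finite) set \<Rightarrow> (real^'n \<Rightarrow> ereal) \<Rightarrow> bool" where
  "lsc_on S w \<longleftrightarrow> (\<forall>x\<in>S. \<forall>c. c < w x \<longrightarrow> (\<exists>e>0. \<forall>y\<in>S. dist y x < e \<longrightarrow> c < w y))"

definition visc_super :: "(real^'n::finite \<Rightarrow> real) \<Rightarrow> (real^'n) set \<Rightarrow> (real^'n) set
                          \<Rightarrow> (real^'n \<Rightarrow> ereal) \<Rightarrow> bool" where
  "visc_super f \<Gamma> \<Omega> w \<longleftrightarrow>
     lsc_on \<Omega> w \<and> (\<forall>x\<in>\<Omega>. w x \<noteq> -\<infinity>) \<and> (\<exists>x\<in>\<Omega>. w x \<noteq> \<infinity>)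
   \<and> (\<forall>x0\<in>\<Omega>. \<forall>\<phi>. C2_on \<Omega> \<phi> \<and> w x0 = ereal (\<phi> x0)
        \<and> (\<exists>r>0. \<forall>x\<in>\<Omega> \<inter> ball x0 r. ereal (\<phi> x) \<le> w x)
        \<longrightarrow> eigvals (- confHess \<phi> x0) \<notin> closure \<Gamma>
            \<or> f (eigvals (- confHess \<phi> x0)) \<le> 1)"

definition u_out :: "real \<Rightarrow> real \<Rightarrow> real^'n::finite \<Rightarrow> real^'n \<Rightarrow> real" where
  "u_out \<alpha> R x0 x = \<alpha> * (R / ((norm (x - x0))^2 - R^2)) powr ((real CARD('n) - 2) / 2)"

end

theory Submission
  imports Defs
begin


lemma grad_hess_eq:
  fixes \<phi> :: "real^'n::finite \<Rightarrow> real"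
  assumes S: "open S" "x \<in> S"
    and d1: "\<And>y. y \<in> S \<Longrightarrow> (\<phi> has_derivative (\<lambda>h. D y \<bullet> h)) (at y)"
    and d2: "(D has_derivative (\<lambda>h. H *v h)) (at x)"
  shows "grad \<phi> x = D x" "hess \<phi> x = H"
proof -
  have g: "grad \<phi> y = D y" if "y \<in> S" for y
  proof -
    have "frechet_derivative \<phi> (at y) = (\<lambda>h. D y \<bullet> h)"
      using frechet_derivative_at[OF d1[OF that]] by simp
    then show ?thesis by (simp add: grad_def vec_eq_iff inner_axis)
  qed
  then show "grad \<phi> x = D x" using S by simp
  have "((\<lambda>y. grad \<phi> y $ i) has_derivative (\<lambda>h. (H *v h) $ i)) (at x)" for i
  proof (rule has_derivative_transform_within_open[OF _ S(1) S(2)])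
    show "((\<lambda>y. D y $ i) has_derivative (\<lambda>h. (H *v h) $ i)) (at x)"
      using bounded_linear.has_derivative[OF bounded_linear_vec_nth d2] .
    show "\<And>y. y \<in> S \<Longrightarrow> D y $ i = grad \<phi> y $ i" using g by simp
  qed
  then have "frechet_derivative (\<lambda>y. grad \<phi> y $ i) (at x) = (\<lambda>h. (H *v h) $ i)" for i
    using frechet_derivative_at by metis
  then show "hess \<phi> x = H"
    by (simp add: hess_def vec_eq_iff matrix_vector_mult_def axis_def if_distrib cong: if_cong)
qed



lemma dP:
  fixes x y :: "real^'n::finite"
  shows "((\<lambda>x. (x-y)\<bullet>(x-y) - \<rho>^2) has_derivative (\<lambda>h. 2 * ((x-y) \<bullet> h))) (at x)"
proof -
  have "((\<lambda>x. (x-y)\<bullet>(x-y) - \<rho>^2) has_derivative (\<lambda>h. ((x-y)\<bullet>(h-0) + (h-0)\<bullet>(x-y)) - 0)) (at x)"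
  proof -
    have d: "((\<lambda>x. x - y) has_derivative (\<lambda>h. h - 0)) (at x)"
      by (intro has_derivative_diff has_derivative_ident has_derivative_const)
    show ?thesis by (rule has_derivative_diff[OF has_derivative_inner[OF d d] has_derivative_const])
  qed
  then show ?thesis by (simp add: inner_commute)
qed

lemma dphi1:
  fixes x y :: "real^'n::finite"
  assumes pos: "0 < (x-y)\<bullet>(x-y) - \<rho>^2"
  shows "((\<lambda>x. K * ((x-y)\<bullet>(x-y) - \<rho>^2) powr (-m)) has_derivative
     (\<lambda>h. ((-2*m*K * ((x-y)\<bullet>(x-y) - \<rho>^2) powr (-m-1)) *\<^sub>R (x-y)) \<bullet> h)) (at x)"
proof -
  let ?P = "(x-y)\<bullet>(x-y) - \<rho>^2"
  have e: "?P powr (-m-1) = ?P powr (-m) / ?P" using pos by (simp add: powr_diff)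
  have "((\<lambda>x. K * ((x-y)\<bullet>(x-y) - \<rho>^2) powr (-m)) has_derivative
     (\<lambda>h. K * (?P powr (-m) * (0 * ln ?P + 2 * ((x-y) \<bullet> h) * (-m) / ?P)))) (at x)"
    by (intro has_derivative_mult_right has_derivative_powr[OF dP has_derivative_const pos]) simp
  moreover have "(\<lambda>h. K * (?P powr (-m) * (0 * ln ?P + 2 * ((x-y) \<bullet> h) * (-m) / ?P)))
      = (\<lambda>h. ((-2*m*K * ?P powr (-m-1)) *\<^sub>R (x-y)) \<bullet> h)"
    apply (rule ext)
    apply (subst inner_scaleR_left)
    using pos by (simp add: e field_simps)
  ultimately show ?thesis by simp
qed



lemma outer_mult: "outer a a *v h = (a \<bullet> h) *\<^sub>R (a::real^'n::finite)"
  by (simp add: vec_eq_iff outer_def matrix_vector_mult_def inner_vec_def sum_distrib_left mult_ac)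

lemma dphi2:
  fixes x y :: "real^'n::finite"
  assumes pos: "0 < (x-y)\<bullet>(x-y) - \<rho>^2"
  shows "((\<lambda>x. (c * ((x-y)\<bullet>(x-y) - \<rho>^2) powr q) *\<^sub>R (x-y)) has_derivative
     (\<lambda>h. ((c * ((x-y)\<bullet>(x-y) - \<rho>^2) powr q) *\<^sub>R mat 1
            + (2*c*q * ((x-y)\<bullet>(x-y) - \<rho>^2) powr (q-1)) *\<^sub>R outer (x-y) (x-y)) *v h)) (at x)"
proof -
  let ?P = "(x-y)\<bullet>(x-y) - \<rho>^2"
  have e: "?P powr (q-1) = ?P powr q / ?P" using pos by (simp add: powr_diff)
  have s: "((\<lambda>x. c * ((x-y)\<bullet>(x-y) - \<rho>^2) powr q) has_derivative
     (\<lambda>h. c * (?P powr q * (0 * ln ?P + 2 * ((x-y) \<bullet> h) * q / ?P)))) (at x)"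
    by (intro has_derivative_mult_right has_derivative_powr[OF dP has_derivative_const pos]) simp
  have d: "((\<lambda>x. x - y) has_derivative (\<lambda>h. h - 0)) (at x)"
    by (intro has_derivative_diff has_derivative_ident has_derivative_const)
  have "((\<lambda>x. (c * ((x-y)\<bullet>(x-y) - \<rho>^2) powr q) *\<^sub>R (x-y)) has_derivative
     (\<lambda>h. (c * ?P powr q) *\<^sub>R (h - 0) + (c * (?P powr q * (0 * ln ?P + 2 * ((x-y) \<bullet> h) * q / ?P))) *\<^sub>R (x-y))) (at x)"
    by (rule has_derivative_scaleR[OF s d])
  moreover have "(\<lambda>h. (c * ?P powr q) *\<^sub>R (h - 0) + (c * (?P powr q * (0 * ln ?P + 2 * ((x-y) \<bullet> h) * q / ?P))) *\<^sub>R (x-y))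
     = (\<lambda>h. ((c * ?P powr q) *\<^sub>R mat 1 + (2*c*q * ?P powr (q-1)) *\<^sub>R outer (x-y) (x-y)) *v h)"
    apply (rule ext)
    apply (simp only: matrix_vector_mult_add_rdistrib scaleR_matrix_vector_assoc[symmetric] matrix_vector_mul_lid outer_mult)
    using pos by (simp add: e)
  ultimately show ?thesis by simp
qed



lemma alg:
  fixes A B K E P Q1 Q2 PA PB S N \<rho> d ai aj :: real
  assumes N: "N > 2"
    and AK: "A*K = E*PA" and BK: "B*K^2 = E*PB" and h1: "PA*Q1 = P" and h2: "PA*Q2 = 1"
    and h3: "PB*Q1*Q1 = 1" and nrm: "S = P + \<rho>^2"
  shows "-(2/(N-2)) * A * ((-2*((N-2)/2)*K*Q1)*d + 2*(-2*((N-2)/2)*K)*(-((N-2)/2)-1)*Q2*(ai*aj))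
     + (2*N/(N-2)^2) * B * ((-2*((N-2)/2)*K*Q1*ai)*(-2*((N-2)/2)*K*Q1*aj))
     - (2/(N-2)^2 * B * ((-2*((N-2)/2)*K*Q1)^2 * S)) * d = -(2*E*\<rho>^2)*d"
proof -
  have AQ1: "A*K*Q1 = E*P" using AK h1 by (metis mult.assoc)
  have AQ2: "A*K*Q2 = E" using AK h2 by (metis mult.assoc mult_1_right)
  have BQ: "B*K^2*Q1^2 = E" using BK h3 by (simp add: power2_eq_square mult.assoc)
  have nz: "N - 2 \<noteq> 0" using N by simp
  have "-(2/(N-2)) * A * ((-2*((N-2)/2)*K*Q1)*d + 2*(-2*((N-2)/2)*K)*(-((N-2)/2)-1)*Q2*(ai*aj))
      = 2*(A*K*Q1)*d - 2*N*(A*K*Q2)*(ai*aj)"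
    using nz by (simp add: field_simps)
  also have "\<dots> = 2*E*P*d - 2*N*E*(ai*aj)" by (simp add: AQ1 AQ2)
  finally have t1: "-(2/(N-2)) * A * ((-2*((N-2)/2)*K*Q1)*d + 2*(-2*((N-2)/2)*K)*(-((N-2)/2)-1)*Q2*(ai*aj))
      = 2*E*P*d - 2*N*E*(ai*aj)" .
  have m2: "-2*((N-2)/2) = -(N-2)" by simp
  have q: "(-2*((N-2)/2)*K*Q1*ai)*(-2*((N-2)/2)*K*Q1*aj) = (N-2)^2*(K^2*Q1^2)*(ai*aj)"
    unfolding m2 by (simp add: power2_eq_square algebra_simps)
  have q2: "(2*N/(N-2)^2) * (N-2)^2 = 2*N" using nz by simp
  have "(2*N/(N-2)^2) * B * ((-2*((N-2)/2)*K*Q1*ai)*(-2*((N-2)/2)*K*Q1*aj)) = ((2*N/(N-2)^2) * (N-2)^2)*(B*K^2*Q1^2)*(ai*aj)"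
    unfolding q by (simp add: mult_ac)
  then have "(2*N/(N-2)^2) * B * ((-2*((N-2)/2)*K*Q1*ai)*(-2*((N-2)/2)*K*Q1*aj)) = 2*N*(B*K^2*Q1^2)*(ai*aj)"
    unfolding q2 .
  then have t2: "(2*N/(N-2)^2) * B * ((-2*((N-2)/2)*K*Q1*ai)*(-2*((N-2)/2)*K*Q1*aj)) = 2*N*E*(ai*aj)"
    by (simp add: BQ)
  have q3: "(-2*((N-2)/2)*K*Q1)^2 = (N-2)^2*(K^2*Q1^2)" unfolding m2 by (simp add: power2_eq_square algebra_simps)
  have q4: "2/(N-2)^2 * (N-2)^2 = 2" using nz by simp
  have "(2/(N-2)^2 * B * ((-2*((N-2)/2)*K*Q1)^2 * S)) * d = (2/(N-2)^2 * (N-2)^2)*(B*K^2*Q1^2)*S*d"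
    unfolding q3 by (simp add: mult_ac)
  then have "(2/(N-2)^2 * B * ((-2*((N-2)/2)*K*Q1)^2 * S)) * d = 2*(B*K^2*Q1^2)*S*d" unfolding q4 .
  then have t3: "(2/(N-2)^2 * B * ((-2*((N-2)/2)*K*Q1)^2 * S)) * d = 2*E*S*d" by (simp add: BQ)
  show ?thesis unfolding t1 t2 t3 by (simp add: nrm algebra_simps)
qed



lemma phi_derivs:
  fixes y :: "real^'n::finite"
  assumes bpos: "\<beta> > 0" and rpos: "\<rho> > 0"
  defines "m \<equiv> (real CARD('n) - 2)/2"
  defines "K \<equiv> \<beta> * \<rho> powr m"
  defines "P \<equiv> (\<lambda>x. (x-y)\<bullet>(x-y) - \<rho>^2)"
  defines "Dv \<equiv> (\<lambda>x. (-2*m*K * P x powr (-m-1)) *\<^sub>R (x-y))"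
  defines "Hm \<equiv> (\<lambda>x. (-2*m*K * P x powr (-m-1)) *\<^sub>R mat 1
            + (2*(-2*m*K)*(-m-1) * P x powr (-m-1-1)) *\<^sub>R outer (x-y) (x-y))"
  defines "U \<equiv> {x. \<rho> < norm (x-y)}"
  shows "open U"
    and "\<And>x. x \<in> U \<Longrightarrow> P x > 0"
    and "\<And>x. x \<in> U \<Longrightarrow> \<beta> * (\<rho> / (norm(x-y)^2 - \<rho>^2)) powr m = K * P x powr (-m)"
    and "\<And>x. x \<in> U \<Longrightarrow> ((\<lambda>x. \<beta> * (\<rho> / (norm(x-y)^2 - \<rho>^2)) powr m) has_derivative (\<lambda>h. Dv x \<bullet> h)) (at x)"
    and "\<And>x. x \<in> U \<Longrightarrow> (Dv has_derivative (\<lambda>h. Hm x *v h)) (at x)"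
    and "continuous_on U Hm"
proof -
  show oU: "open U" unfolding U_def by (intro open_Collect_less continuous_intros)
  show Ppos: "P x > 0" if "x \<in> U" for x
  proof -
    have "\<rho>^2 < norm (x-y)^2" using that rpos unfolding U_def by (simp add: power_strict_mono)
    then show ?thesis unfolding P_def by (simp add: power2_norm_eq_inner)
  qed
  show eq: "\<beta> * (\<rho> / (norm(x-y)^2 - \<rho>^2)) powr m = K * P x powr (-m)" if "x \<in> U" for x
    using Ppos[OF that] rpos unfolding K_def P_def
    by (simp add: power2_norm_eq_inner powr_divide powr_minus_divide)
  show "((\<lambda>x. \<beta> * (\<rho> / (norm(x-y)^2 - \<rho>^2)) powr m) has_derivative (\<lambda>h. Dv x \<bullet> h)) (at x)"
    if "x \<in> U" for x
  proof (rule has_derivative_transform_within_open[OF _ oU that])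
    show "((\<lambda>x. K * P x powr (-m)) has_derivative (\<lambda>h. Dv x \<bullet> h)) (at x)"
      unfolding Dv_def P_def by (rule dphi1) (use Ppos[OF that] in \<open>simp add: P_def\<close>)
    show "\<And>x. x \<in> U \<Longrightarrow> K * P x powr (-m) = \<beta> * (\<rho> / (norm(x-y)^2 - \<rho>^2)) powr m"
      using eq by simp
  qed
  show "(Dv has_derivative (\<lambda>h. Hm x *v h)) (at x)" if "x \<in> U" for x
    unfolding Dv_def Hm_def P_def
    by (rule dphi2[where c="-2*m*K" and q="-m-1"]) (use Ppos[OF that] in \<open>simp add: P_def\<close>)
  show "continuous_on U Hm"
  proof -
    have cP: "continuous_on U P" unfolding P_def by (intro continuous_intros)
    have cp: "continuous_on U (\<lambda>x. P x powr e)" for e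
      by (rule continuous_on_powr[OF cP continuous_on_const]) (use Ppos in force)
    have co: "continuous_on U (\<lambda>x. outer (x-y) (x-y))"
      unfolding outer_def
      by (intro continuous_on_vec_lambda continuous_on_mult continuous_on_component continuous_on_diff
          continuous_on_id continuous_on_const)
    show ?thesis unfolding Hm_def
      by (intro continuous_on_add continuous_on_scaleR continuous_on_mult continuous_on_const cp co)
  qed
qed



lemma confHess_phi:
  fixes y :: "real^'n::finite"
  assumes dim: "CARD('n) \<ge> 3" and bpos: "\<beta> > 0" and rpos: "\<rho> > 0" and xU: "\<rho> < norm (x-y)"
  shows "confHess (\<lambda>x. \<beta> * (\<rho> / (norm(x-y)^2 - \<rho>^2)) powr ((real CARD('n) - 2)/2)) x
       = (-(2 * \<beta> powr (-4/(real CARD('n)-2)))) *\<^sub>R mat 1"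
proof -
  define N where "N = real CARD('n)"
  define m where "m = (real CARD('n) - 2)/2"
  define K where "K = \<beta> * \<rho> powr m"
  define P where "P = (\<lambda>x. (x-y)\<bullet>(x-y) - \<rho>^2)"
  define Dv where "Dv = (\<lambda>x. (-2*m*K * P x powr (-m-1)) *\<^sub>R (x-y))"
  define Hm where "Hm = (\<lambda>x. (-2*m*K * P x powr (-m-1)) *\<^sub>R mat 1
            + (2*(-2*m*K)*(-m-1) * P x powr (-m-1-1)) *\<^sub>R outer (x-y) (x-y))"
  define U where "U = {x. \<rho> < norm (x-y)}"
  define \<phi> where "\<phi> = (\<lambda>x. \<beta> * (\<rho> / (norm(x-y)^2 - \<rho>^2)) powr m)"
  note pd = phi_derivs[OF bpos rpos, where y=y, folded m_def, folded K_def, folded P_def, folded Dv_def Hm_def U_def,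
     folded \<phi>_def]
  have xU': "x \<in> U" using xU by (simp add: U_def)
  have gh: "grad \<phi> x = Dv x" "hess \<phi> x = Hm x"
    using grad_hess_eq[OF pd(1) xU' pd(4) pd(5)[OF xU']] by (simp_all add: Dv_def Hm_def P_def)
  have val: "\<phi> x = K * P x powr (-m)" using pd(3)[OF xU'] by (simp add: \<phi>_def P_def)
  have N2: "N > 2" using dim by (simp add: N_def)
  have mN: "m = (N-2)/2" by (simp add: m_def N_def)
  define v where "v = K * P x powr (-m)"
  define A where "A = v powr (-(N+2)/(N-2))"
  define B where "B = v powr (-2*N/(N-2))"
  define E where "E = K powr (-4/(N-2))"
  define Q1 where "Q1 = P x powr (-m-1)"
  define Q2 where "Q2 = P x powr (-m-1-1)"
  define PA where "PA = P x powr (m+2)"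
  define PB where "PB = P x powr N"
  have Ppos: "P x > 0" using pd(2)[OF xU'] by (simp add: P_def)
  have mpos: "m > 0" using N2 mN by simp
  have Kpos: "K > 0" using bpos rpos by (simp add: K_def)
  have AK: "A*K = E*PA"
  proof -
    have "A = K powr (-(N+2)/(N-2)) * P x powr (-m * (-(N+2)/(N-2)))"
      using Kpos Ppos by (simp add: A_def v_def powr_mult powr_powr)
    also have "-m * (-(N+2)/(N-2)) = m + 2" using N2 mN by (simp add: field_simps)
    finally have "A*K = K powr (-(N+2)/(N-2)) * K powr 1 * PA" using Kpos by (simp add: PA_def)
    also have "K powr (-(N+2)/(N-2)) * K powr 1 = E"
      unfolding E_def powr_add[symmetric] using N2 by (simp add: field_simps)
    finally show ?thesis by simp
  qed
  have BK: "B*K^2 = E*PB"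
  proof -
    have "B = K powr (-2*N/(N-2)) * P x powr (-m * (-2*N/(N-2)))"
      using Kpos Ppos by (simp add: B_def v_def powr_mult powr_powr)
    also have "-m * (-2*N/(N-2)) = N" unfolding mN using N2 by (simp add: field_simps)
    finally have "B*K^2 = K powr (-2*N/(N-2)) * K powr 2 * PB" using Kpos
      by (simp add: PB_def powr_numeral)
    also have "K powr (-2*N/(N-2)) * K powr 2 = E"
      unfolding E_def powr_add[symmetric] using N2 by (simp add: field_simps)
    finally show ?thesis by simp
  qed
  have h1: "PA*Q1 = P x" unfolding PA_def Q1_def powr_add[symmetric] using Ppos by simp
  have h2: "PA*Q2 = 1" unfolding PA_def Q2_def powr_add[symmetric] using Ppos by simp
  have h3: "PB*Q1*Q1 = 1" unfolding PB_def Q1_def powr_add[symmetric] using Ppos mN by (simp add: algebra_simps)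
  have nrm: "norm (x-y)^2 = P x + \<rho>^2" by (simp add: P_def power2_norm_eq_inner)
  have Eval: "E * \<rho>^2 = \<beta> powr (-4/(N-2))"
  proof -
    have "E = \<beta> powr (-4/(N-2)) * \<rho> powr (m * (-4/(N-2)))"
      using bpos rpos by (simp add: E_def K_def powr_mult powr_powr)
    also have "m * (-4/(N-2)) = -2" using mN N2 by (simp add: field_simps)
    finally show ?thesis using rpos by (simp add: powr_minus powr_numeral field_simps)
  qed
  have cH: "confHess \<phi> x = (-(2/(N-2)) * A) *\<^sub>R Hm x + ((2*N/(N-2)^2) * B) *\<^sub>R outer (Dv x) (Dv x)
        - ((2/(N-2)^2) * B * (norm (Dv x))^2) *\<^sub>R mat 1"
    unfolding confHess_def Let_def gh val N_def[symmetric] A_def B_def v_def by simp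
  have entry: "((-(2/(N-2)) * A) *\<^sub>R Hm x + ((2*N/(N-2)^2) * B) *\<^sub>R outer (Dv x) (Dv x)
        - ((2/(N-2)^2) * B * (norm (Dv x))^2) *\<^sub>R mat 1) $ i $ j = ((-(2 * \<beta> powr (-4/(N-2)))) *\<^sub>R (mat 1::real^'n^'n)) $ i $ j"
    for i j :: 'n
  proof -
    have nD: "(norm (Dv x))^2 = (-2*((N-2)/2)*K*Q1)^2 * norm (x-y)^2"
      by (simp only: Dv_def Q1_def norm_scaleR power_mult_distrib power2_abs mN)
    define d :: real where "d = (if i = j then 1 else 0)"
    define c where "c = -2*((N-2)/2)*K*Q1"
    have mat1: "(mat 1 :: real^'n^'n) $ i $ j = d" by (simp add: mat_def d_def)
    have Hij: "Hm x $ i $ j = c*d + 2*(-2*((N-2)/2)*K)*(-((N-2)/2)-1)*Q2*((x-y)$i*(x-y)$j)"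
      by (simp add: Hm_def outer_def mat1 Q1_def Q2_def mN c_def)
    have Dij: "outer (Dv x) (Dv x) $ i $ j = (c*(x-y)$i)*(c*(x-y)$j)"
      by (simp add: outer_def Dv_def Q1_def mN c_def)
    have nD': "(norm (Dv x))^2 = c^2 * norm (x-y)^2" using nD by (simp add: c_def)
    have "((-(2/(N-2)) * A) *\<^sub>R Hm x + ((2*N/(N-2)^2) * B) *\<^sub>R outer (Dv x) (Dv x)
        - ((2/(N-2)^2) * B * (norm (Dv x))^2) *\<^sub>R mat 1) $ i $ j
        = -(2/(N-2)) * A * (c*d + 2*(-2*((N-2)/2)*K)*(-((N-2)/2)-1)*Q2*((x-y)$i*(x-y)$j))
     + (2*N/(N-2)^2) * B * ((c*(x-y)$i)*(c*(x-y)$j))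
     - (2/(N-2)^2 * B * (c^2 * norm (x-y)^2)) * d"
      by (simp only: vector_add_component vector_minus_component vector_scaleR_component
           real_scaleR_def Hij Dij nD' mat1)
    also have "\<dots> = -(2*E*\<rho>^2)*d"
      unfolding c_def by (rule alg[OF N2 AK BK h1 h2 h3 nrm])
    also have "\<dots> = ((-(2 * \<beta> powr (-4/(N-2)))) *\<^sub>R (mat 1::real^'n^'n)) $ i $ j"
      using Eval by (simp add: mat1)
    finally show "((-(2/(N-2)) * A) *\<^sub>R Hm x + ((2*N/(N-2)^2) * B) *\<^sub>R outer (Dv x) (Dv x)
        - ((2/(N-2)^2) * B * (norm (Dv x))^2) *\<^sub>R mat 1) $ i $ j = ((-(2 * \<beta> powr (-4/(N-2)))) *\<^sub>R (mat 1::real^'n^'n)) $ i $ j" .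
  qed
  have "confHess \<phi> x = (-(2 * \<beta> powr (-4/(N-2)))) *\<^sub>R mat 1"
    unfolding cH vec_eq_iff using entry by blast
  then show ?thesis by (simp add: \<phi>_def m_def N_def)
qed



lemma C2_phi:
  fixes y :: "real^'n::finite"
  assumes bpos: "\<beta> > 0" and rpos: "\<rho> > 0" and S: "S \<subseteq> {x. \<rho> < norm (x-y)}"
  shows "C2_on S (\<lambda>x. \<beta> * (\<rho> / (norm(x-y)^2 - \<rho>^2)) powr ((real CARD('n) - 2)/2))"
proof -
  note pd = phi_derivs[OF bpos rpos, where y=y]
  show ?thesis unfolding C2_on_def
    apply (rule exI, rule exI, intro conjI ballI)
      apply (rule pd(4)) using S apply blast
     apply (rule pd(5)) using S apply blast
    apply (rule continuous_on_subset[OF pd(6)]) using S by blast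
qed

lemma mul_scal: "(A::real^'n::finite^'n) ** (c *\<^sub>R mat 1) = c *\<^sub>R A"
  by (simp add: vec_eq_iff matrix_matrix_mult_def mat_def if_distrib mult_ac cong: if_cong)

lemma diag_const: "diag_mat (\<chi> i. c) = c *\<^sub>R (mat 1 :: real^'n::finite^'n)"
  by (simp add: vec_eq_iff diag_mat_def mat_def)

lemma eigvals_scalar: "eigvals (c *\<^sub>R (mat 1 :: real^'n::finite^'n)) = (\<chi> i. c)"
proof -
  have ex: "\<exists>\<mu>. \<exists>P. orthogonal_matrix P \<and> c *\<^sub>R (mat 1 :: real^'n^'n) = transpose P ** diag_mat \<mu> ** P"
    by (rule exI[of _ "\<chi> i. c"], rule exI[of _ "mat 1"])
       (simp add: diag_const orthogonal_matrix_id transpose_mat)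
  define \<mu> where "\<mu> = eigvals (c *\<^sub>R (mat 1 :: real^'n^'n))"
  have "\<exists>P. orthogonal_matrix P \<and> c *\<^sub>R (mat 1 :: real^'n^'n) = transpose P ** diag_mat \<mu> ** P"
    unfolding \<mu>_def eigvals_def by (rule someI_ex[OF ex])
  then obtain P where P: "orthogonal_matrix P" and e: "c *\<^sub>R (mat 1 :: real^'n^'n) = transpose P ** diag_mat \<mu> ** P"
    by blast
  have "P ** (c *\<^sub>R (mat 1 :: real^'n^'n)) ** transpose P = (P ** transpose P) ** diag_mat \<mu> ** (P ** transpose P)"
    unfolding e by (simp add: matrix_mul_assoc)
  then have "diag_mat \<mu> = c *\<^sub>R (mat 1 :: real^'n^'n)"
    using P unfolding orthogonal_matrix_def
    by (simp add: mul_scal scalar_matrix_assoc[symmetric])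
  then have "\<forall>i j. (if i = j then \<mu> $ i else 0) = c * (if i = j then 1 else 0)"
    by (simp add: vec_eq_iff diag_mat_def mat_def)
  then have "\<mu> $ i = c" for i by (metis mult.right_neutral)
  then show ?thesis unfolding \<mu>_def[symmetric] by (simp add: vec_eq_iff)
qed



lemma closure_cone:
  fixes \<Gamma> :: "(real^'n::finite) set"
  assumes cone: "\<forall>\<mu>\<in>\<Gamma>. \<forall>t>0. t *\<^sub>R \<mu> \<in> \<Gamma>" and t: "t > 0" and mu: "\<mu> \<in> closure \<Gamma>"
  shows "t *\<^sub>R \<mu> \<in> closure \<Gamma>"
proof -
  have "t *\<^sub>R \<mu> \<in> ((*\<^sub>R) t) ` closure \<Gamma>" using mu by blast
  also have "\<dots> = closure (((*\<^sub>R) t) ` \<Gamma>)" by (rule closure_scaleR)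
  also have "\<dots> \<subseteq> closure \<Gamma>" using cone t by (intro closure_mono) auto
  finally show ?thesis .
qed

lemma u_out_eq: fixes y :: "real^'n::finite" shows "u_out \<alpha> \<rho> y = (\<lambda>x. \<alpha> * (\<rho> / (norm(x-y)^2 - \<rho>^2)) powr ((real CARD('n) - 2)/2))"
  by (simp add: u_out_def fun_eq_iff)

theorem lemma3p2:
  fixes f :: "real^'n::finite \<Rightarrow> real" and \<Gamma> :: "(real^'n) set"
    and \<Omega> :: "(real^'n) set" and w :: "real^'n \<Rightarrow> ereal"
    and \<alpha> R :: real and x0 :: "real^'n"
  assumes dim: "CARD('n) \<ge> 3"
    and struct: "structural f \<Gamma>"
    and alpha_pos: "\<alpha> > 0"
    and alpha_canon: "\<And>R' y0 x. R' > 0 \<Longrightarrow> norm (x - y0) > R' \<Longrightarrow>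
         eigvals (- confHess (u_out \<alpha> R' y0) x) \<in> closure \<Gamma>
         \<and> f (eigvals (- confHess (u_out \<alpha> R' y0) x)) = 1"
    and dom: "open \<Omega>" "connected \<Omega>" "bounded \<Omega>" "\<Omega> \<noteq> {}"
    and wpos: "\<forall>x\<in>\<Omega>. w x > 0"
    and super: "visc_super f \<Gamma> \<Omega> w"
    and blowup: "\<forall>M::real. \<exists>\<delta>>0. \<forall>x\<in>\<Omega>. infdist x (frontier \<Omega>) < \<delta> \<longrightarrow> ereal M < w x"
    and R_pos: "R > 0"
    and ball_out: "ball x0 R \<subseteq> - closure \<Omega>"
  shows "\<forall>x\<in>\<Omega>. ereal (u_out \<alpha> R x0 x) \<le> w x \<and> u_out \<alpha> R x0 x > 0"
proof -
  define N where "N = real CARD('n)"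
  define e where "e = -4/(N-2)"
  have N2: "N > 2" using dim by (simp add: N_def)
  have eneg: "e < 0" using N2 by (simp add: e_def)
  have cone: "\<forall>\<mu>\<in>\<Gamma>. \<forall>t>0. t *\<^sub>R \<mu> \<in> \<Gamma>" using struct unfolding structural_def by (elim conjE) assumption
  have hom: "\<exists>d>0. \<forall>\<mu>\<in>closure \<Gamma>. \<forall>t>0. f (t *\<^sub>R \<mu>) = t powr d * f \<mu>"
    using struct unfolding structural_def by (elim conjE) assumption
  obtain dd where dd: "dd > 0" "\<forall>\<mu>\<in>closure \<Gamma>. \<forall>t>0. f (t *\<^sub>R \<mu>) = t powr dd * f \<mu>"
    using hom by blast
  have lsc: "lsc_on \<Omega> w" using super unfolding visc_super_def by (elim conjE) assumption
  have ninf: "\<forall>x\<in>\<Omega>. w x \<noteq> -\<infinity>" using super unfolding visc_super_def by (elim conjE) assumption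
  have fin: "\<exists>x\<in>\<Omega>. w x \<noteq> \<infinity>" using super unfolding visc_super_def by (elim conjE) assumption
  have test0: "\<forall>x0\<in>\<Omega>. \<forall>\<phi>. C2_on \<Omega> \<phi> \<and> w x0 = ereal (\<phi> x0)
        \<and> (\<exists>r>0. \<forall>x\<in>\<Omega> \<inter> ball x0 r. ereal (\<phi> x) \<le> w x)
        \<longrightarrow> eigvals (- confHess \<phi> x0) \<notin> closure \<Gamma>
            \<or> f (eigvals (- confHess \<phi> x0)) \<le> 1"
    using super unfolding visc_super_def by (elim conjE) assumption
  have test: "\<And>z \<phi>. z \<in> \<Omega> \<Longrightarrow> C2_on \<Omega> \<phi> \<Longrightarrow> w z = ereal (\<phi> z) \<Longrightarrow>
        (\<exists>r>0. \<forall>x\<in>\<Omega> \<inter> ball z r. ereal (\<phi> x) \<le> w x) \<Longrightarrow>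
        eigvals (- confHess \<phi> z) \<notin> closure \<Gamma> \<or> f (eigvals (- confHess \<phi> z)) \<le> 1"
  proof -
    fix z \<phi> assume "z \<in> \<Omega>" "C2_on \<Omega> \<phi>" "w z = ereal (\<phi> z)" "\<exists>r>0. \<forall>x\<in>\<Omega> \<inter> ball z r. ereal (\<phi> x) \<le> w x"
    then show "eigvals (- confHess \<phi> z) \<notin> closure \<Gamma> \<or> f (eigvals (- confHess \<phi> z)) \<le> 1"
      using test0 by blast
  qed
  have far: "R < norm (x - x0)" if "x \<in> \<Omega>" for x
  proof -
    have "\<Omega> \<inter> ball x0 R = {}" using ball_out closure_subset by blast
    then have "\<Omega> \<inter> cball x0 R = {}"
      using open_Int_closure_eq_empty[OF dom(1), of "ball x0 R"] R_pos by simp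
    then have "x \<notin> cball x0 R" using that by blast
    then show ?thesis by (simp add: dist_norm norm_minus_commute)
  qed
  have ev: "eigvals (- confHess (\<lambda>x. \<beta> * (\<rho> / (norm(x-x0)^2 - \<rho>^2)) powr ((real CARD('n) - 2)/2)) z)
      = (\<chi> i. 2 * \<beta> powr e)"
    if "\<beta> > 0" "\<rho> > 0" "\<rho> < norm (z - x0)" for \<beta> \<rho> z
  proof -
    have "- confHess (\<lambda>x. \<beta> * (\<rho> / (norm(x-x0)^2 - \<rho>^2)) powr ((real CARD('n) - 2)/2)) z
        = (2 * \<beta> powr e) *\<^sub>R mat 1"
      using confHess_phi[OF dim that] by (simp add: e_def N_def)
    then show ?thesis by (simp add: eigvals_scalar)
  qed
  have key: "ereal (u_out \<alpha> \<rho> x0 x) \<le> w x" if rho: "0 < \<rho>" "\<rho> < R" and xO: "x \<in> \<Omega>" for \<rho> x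
  proof -
    define m where "m = (real CARD('n) - 2)/2"
    define v where "v = u_out \<alpha> \<rho> x0"
    have vdef: "v = (\<lambda>x. \<alpha> * (\<rho> / (norm(x-x0)^2 - \<rho>^2)) powr m)"
      by (simp add: v_def m_def u_out_eq)
    have sub: "\<Omega> \<subseteq> {x. \<rho> < norm (x - x0)}" using far rho by force
    have vpos: "v y > 0" if "y \<in> \<Omega>" for y
    proof -
      have "\<rho>^2 < norm (y-x0)^2" using far[OF that] rho by (simp add: power_strict_mono)
      then have q: "\<rho> / (norm(y-x0)^2 - \<rho>^2) > 0" using rho by simp
      then have "(\<rho> / (norm(y-x0)^2 - \<rho>^2)) powr m > 0" by (simp only: powr_gt_zero)
      then show ?thesis using alpha_pos by (simp add: vdef)
    qed
    define V where "V = \<alpha> * (\<rho> / (R^2 - \<rho>^2)) powr m"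
    have vle: "v y \<le> V" if "y \<in> \<Omega>" for y
    proof -
      have a1: "R^2 \<le> norm (y-x0)^2" using far[OF that] R_pos by (simp add: power_mono)
      have RR: "R^2 - \<rho>^2 > 0" using rho by (simp add: power_strict_mono)
      have p1: "norm(y-x0)^2 - \<rho>^2 > 0" using a1 RR by linarith
      have p2: "R^2 - \<rho>^2 \<le> norm(y-x0)^2 - \<rho>^2" using a1 by linarith
      have "\<rho> / (norm (y-x0)^2 - \<rho>^2) \<le> \<rho> / (R^2 - \<rho>^2)"
        by (rule divide_left_mono[OF p2]) (use rho p1 RR in \<open>simp_all\<close>)
      moreover have "0 \<le> \<rho> / (norm (y-x0)^2 - \<rho>^2)" by (rule divide_nonneg_pos[OF _ p1]) (use rho in simp)
      ultimately have "(\<rho> / (norm (y-x0)^2 - \<rho>^2)) powr m \<le> (\<rho> / (R^2 - \<rho>^2)) powr m"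
        using dim by (intro powr_mono2) (auto simp: m_def)
      then show ?thesis unfolding vdef V_def using alpha_pos by simp
    qed
    have vcont: "continuous_on \<Omega> v"
    proof (rule continuous_at_imp_continuous_on, intro ballI)
      fix y assume "y \<in> \<Omega>"
      then have "y \<in> {x. \<rho> < norm (x-x0)}" using sub by blast
      from has_derivative_continuous[OF phi_derivs(4)[OF alpha_pos rho(1), where y=x0, OF this]]
      show "isCont v y" unfolding vdef m_def by simp
    qed
    obtain p where p: "p \<in> \<Omega>" "w p \<noteq> \<infinity>" using fin by blast
    obtain W0 where W0: "w p = ereal W0" using p ninf by (cases "w p") auto
    define S where "S = {s. 0 \<le> s \<and> (\<forall>y\<in>\<Omega>. ereal (s * v y) \<le> w y)}"
    have S0: "0 \<in> S" unfolding S_def using wpos by (auto simp: zero_ereal_def less_imp_le)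
    have Sbd: "s \<le> W0 / v p" if "s \<in> S" for s
    proof -
      have "ereal (s * v p) \<le> ereal W0" using that p(1) W0 unfolding S_def by auto
      then show ?thesis using vpos[OF p(1)] by (simp add: pos_le_divide_eq)
    qed
    have bdd: "bdd_above S" using Sbd by (auto simp: bdd_above_def)
    define s0 where "s0 = Sup S"
    have s0ge: "0 \<le> s0" using cSup_upper[OF S0 bdd] s0_def by simp
    have s0S: "ereal (s0 * v y) \<le> w y" if yO: "y \<in> \<Omega>" for y
    proof (cases "w y")
      case (real r)
      have "s \<le> r / v y" if "s \<in> S" for s
      proof -
        have "ereal (s * v y) \<le> ereal r" using that yO real unfolding S_def by auto
        then show ?thesis using vpos[OF yO] by (simp add: pos_le_divide_eq)
      qed
      then have "s0 \<le> r / v y" unfolding s0_def using S0 by (intro cSup_least) auto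
      then show ?thesis using vpos[OF yO] real by (simp add: pos_le_divide_eq)
    next
      case PInf then show ?thesis by simp
    next
      case MInf then show ?thesis using ninf yO by simp
    qed
    have "1 \<le> s0"
    proof (rule ccontr)
      assume "\<not> 1 \<le> s0"
      then have s01: "s0 < 1" by simp
      show False
      proof (cases "\<exists>z\<in>\<Omega>. w z = ereal (s0 * v z)")
        case True
        then obtain z where z: "z \<in> \<Omega>" "w z = ereal (s0 * v z)" by blast
        have s0pos: "s0 > 0"
        proof (rule ccontr)
          assume "\<not> s0 > 0"
          then have "s0 = 0" using s0ge by simp
          then show False using z wpos by (metis less_irrefl mult_zero_left zero_ereal_def)
        qed
        define \<phi> where "\<phi> = (\<lambda>x. (s0*\<alpha>) * (\<rho> / (norm(x-x0)^2 - \<rho>^2)) powr ((real CARD('n) - 2)/2))"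
        have \<phi>v: "\<phi> y = s0 * v y" for y by (simp add: \<phi>_def vdef m_def)
        have bpos: "s0*\<alpha> > 0" using s0pos alpha_pos by simp
        have C2: "C2_on \<Omega> \<phi>" unfolding \<phi>_def by (rule C2_phi[OF bpos rho(1) sub])
        have touch: "\<exists>r>0. \<forall>x\<in>\<Omega> \<inter> ball z r. ereal (\<phi> x) \<le> w x"
          by (rule exI[of _ 1]) (simp add: \<phi>v s0S)
        have zfar: "\<rho> < norm (z - x0)" using sub z by blast
        have alt: "eigvals (- confHess \<phi> z) \<notin> closure \<Gamma> \<or> f (eigvals (- confHess \<phi> z)) \<le> 1"
        proof -
          have wz: "w z = ereal (\<phi> z)" using z(2) by (simp only: \<phi>v)
          show ?thesis by (rule test[OF z(1) C2 wz touch])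
        qed
        have e1: "eigvals (- confHess \<phi> z) = (\<chi> i. 2 * (s0*\<alpha>) powr e)"
          unfolding \<phi>_def by (rule ev[OF bpos rho(1) zfar])
        have can: "eigvals (- confHess (u_out \<alpha> \<rho> x0) z) \<in> closure \<Gamma>
            \<and> f (eigvals (- confHess (u_out \<alpha> \<rho> x0) z)) = 1"
          using alpha_canon[OF rho(1) zfar] .
        have e0: "eigvals (- confHess (u_out \<alpha> \<rho> x0) z) = (\<chi> i. 2 * \<alpha> powr e)"
          unfolding u_out_eq by (rule ev[OF alpha_pos rho(1) zfar])
        define \<mu>0 where "\<mu>0 = ((\<chi> i. 2 * \<alpha> powr e) :: real^'n)"
        define t where "t = s0 powr e"
        have tgt: "t > 1"
        proof -
          have "1 powr e < s0 powr e" using powr_less_mono2_neg[OF eneg s0pos s01] .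
          then show ?thesis by (simp add: t_def)
        qed
        have mt: "(\<chi> i. 2 * (s0*\<alpha>) powr e) = t *\<^sub>R \<mu>0"
          using s0pos alpha_pos by (simp add: vec_eq_iff \<mu>0_def t_def powr_mult)
        have mu0: "\<mu>0 \<in> closure \<Gamma>" "f \<mu>0 = 1" using can e0 \<mu>0_def by auto
        have inG: "t *\<^sub>R \<mu>0 \<in> closure \<Gamma>" by (rule closure_cone[OF cone _ mu0(1)]) (use tgt in simp)
        have "f (t *\<^sub>R \<mu>0) = t powr dd" using dd(2) mu0 tgt by simp
        moreover have "t powr dd > 1" using tgt dd(1) by simp
        ultimately show False using alt e1 mt inG by auto
      next
        case False
        have strict: "ereal (s0 * v y) < w y" if "y \<in> \<Omega>" for y
          using s0S[OF that] that False by (auto simp: order.order_iff_strict)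
        define M where "M = (s0+1) * V"
        obtain \<delta> where \<delta>: "\<delta> > 0" "\<forall>x\<in>\<Omega>. infdist x (frontier \<Omega>) < \<delta> \<longrightarrow> ereal M < w x"
          using blowup by blast
        define Kc where "Kc = {x\<in>\<Omega>. \<delta> \<le> infdist x (frontier \<Omega>)}"
        have Kc_eq: "Kc = closure \<Omega> \<inter> {x. \<delta> \<le> infdist x (frontier \<Omega>)}"
        proof
          show "Kc \<subseteq> closure \<Omega> \<inter> {x. \<delta> \<le> infdist x (frontier \<Omega>)}"
            using closure_subset unfolding Kc_def by auto
          show "closure \<Omega> \<inter> {x. \<delta> \<le> infdist x (frontier \<Omega>)} \<subseteq> Kc"
          proof
            fix x assume x: "x \<in> closure \<Omega> \<inter> {x. \<delta> \<le> infdist x (frontier \<Omega>)}"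
            have "x \<in> \<Omega>"
            proof (rule ccontr)
              assume "x \<notin> \<Omega>"
              then have "x \<in> frontier \<Omega>" using x interior_open[OF dom(1)] unfolding frontier_def by auto
              then show False using x \<delta>(1) by simp
            qed
            then show "x \<in> Kc" using x unfolding Kc_def by auto
          qed
        qed
        have cKc: "compact Kc"
          unfolding compact_eq_bounded_closed
        proof
          show "bounded Kc" using dom(3) unfolding Kc_def by (rule bounded_subset) auto
          show "closed Kc" unfolding Kc_eq
            by (intro closed_Int closed_closure closed_Collect_le continuous_on_const
                continuous_on_infdist continuous_on_id)
        qed
        have unif: "\<exists>\<epsilon>>0. \<forall>y\<in>Kc. ereal ((s0+\<epsilon>) * v y) < w y"
        proof (rule ccontr)
          assume na: "\<not> (\<exists>\<epsilon>>0. \<forall>y\<in>Kc. ereal ((s0+\<epsilon>) * v y) < w y)"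
          have "\<forall>k::nat. \<exists>y\<in>Kc. w y \<le> ereal ((s0 + inverse (real (Suc k))) * v y)"
          proof
            fix k :: nat
            have pos: "inverse (real (Suc k)) > 0" by simp
            have "\<not> (\<forall>y\<in>Kc. ereal ((s0 + inverse (real (Suc k))) * v y) < w y)"
              using na pos by blast
            then show "\<exists>y\<in>Kc. w y \<le> ereal ((s0 + inverse (real (Suc k))) * v y)"
              by (meson not_less)
          qed
          then obtain ys where ys: "\<And>k. ys k \<in> Kc" "\<And>k. w (ys k) \<le> ereal ((s0 + inverse (real (Suc k))) * v (ys k))"
            by metis
          obtain l r where l: "l \<in> Kc" "strict_mono r" "(ys \<circ> r) \<longlonglongrightarrow> l"
            using cKc ys(1) unfolding compact_def by metis
          have lO: "l \<in> \<Omega>" using l(1) Kc_def by auto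
          obtain a where a: "ereal (s0 * v l) < ereal a" "ereal a < w l"
            using ereal_dense2[OF strict[OF lO]] by blast
          obtain ee where ee: "ee > 0" "\<forall>y\<in>\<Omega>. dist y l < ee \<longrightarrow> ereal a < w y"
            using lsc lO a(2) unfolding lsc_on_def by blast
          have ev1: "eventually (\<lambda>k. dist ((ys \<circ> r) k) l < ee) sequentially"
            using l(3) ee(1) by (rule tendstoD)
          have lim1: "(\<lambda>k. inverse (real (Suc (r k)))) \<longlonglongrightarrow> 0"
            using LIMSEQ_subseq_LIMSEQ[OF LIMSEQ_inverse_real_of_nat l(2)] by (simp add: o_def)
          have lim2: "(\<lambda>k. v ((ys \<circ> r) k)) \<longlonglongrightarrow> v l"
            using continuous_on_tendsto_compose[OF vcont l(3) lO] ys(1) unfolding Kc_def by auto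
          have lim3: "(\<lambda>k. (s0 + inverse (real (Suc (r k)))) * v ((ys \<circ> r) k)) \<longlonglongrightarrow> s0 * v l"
            using tendsto_mult[OF tendsto_add[OF tendsto_const lim1] lim2] by simp
          have ev2: "eventually (\<lambda>k. (s0 + inverse (real (Suc (r k)))) * v ((ys \<circ> r) k) < a) sequentially"
            using order_tendstoD(2)[OF lim3] a(1) by simp
          obtain k where k: "dist ((ys \<circ> r) k) l < ee" "(s0 + inverse (real (Suc (r k)))) * v ((ys \<circ> r) k) < a"
            using eventually_happens'[OF _ eventually_conj[OF ev1 ev2]] by auto
          have "ereal a < w (ys (r k))" using ee(2) ys(1)[of "r k"] k(1) unfolding Kc_def by auto
          also have "\<dots> \<le> ereal ((s0 + inverse (real (Suc (r k)))) * v (ys (r k)))" using ys(2) .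
          also have "\<dots> < ereal a" using k(2) by simp
          finally have "ereal a < ereal a" .
          then show False by simp
        qed
        then obtain \<epsilon> where \<epsilon>: "\<epsilon> > 0" "\<forall>y\<in>Kc. ereal ((s0+\<epsilon>) * v y) < w y" by blast
        define \<epsilon>' where "\<epsilon>' = min \<epsilon> 1"
        have "s0 + \<epsilon>' \<in> S"
          unfolding S_def
        proof (intro CollectI conjI ballI)
          show "0 \<le> s0 + \<epsilon>'" using s0ge \<epsilon>(1) by (simp add: \<epsilon>'_def)
          fix y assume yO: "y \<in> \<Omega>"
          show "ereal ((s0+\<epsilon>') * v y) \<le> w y"
          proof (cases "y \<in> Kc")
            case True
            have "(s0+\<epsilon>') * v y \<le> (s0+\<epsilon>) * v y"
              using vpos[OF yO] by (intro mult_right_mono) (auto simp: \<epsilon>'_def)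
            then have "ereal ((s0+\<epsilon>') * v y) \<le> ereal ((s0+\<epsilon>) * v y)" by simp
            also have "\<dots> \<le> w y" using \<epsilon>(2) True less_imp_le by blast
            finally show ?thesis .
          next
            case False
            then have "infdist y (frontier \<Omega>) < \<delta>" using yO Kc_def by auto
            then have wM: "ereal M < w y" using \<delta>(2) yO by blast
            have "(s0+\<epsilon>') * v y \<le> M" unfolding M_def
              using vle[OF yO] vpos[OF yO] s0ge by (intro mult_mono) (auto simp: \<epsilon>'_def)
            then have "ereal ((s0+\<epsilon>') * v y) \<le> ereal M" by simp
            also have "\<dots> \<le> w y" using wM by simp
            finally show ?thesis .
          qed
        qed
        then have "s0 + \<epsilon>' \<le> s0" unfolding s0_def by (rule cSup_upper[OF _ bdd])
        then show False using \<epsilon>(1) by (simp add: \<epsilon>'_def)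
      qed
    qed
    then have "v x \<le> s0 * v x" using vpos[OF xO] by simp
    then have "ereal (v x) \<le> ereal (s0 * v x)" by simp
    also have "\<dots> \<le> w x" by (rule s0S[OF xO])
    finally show ?thesis by (simp add: v_def)
  qed
  show ?thesis
  proof (intro ballI conjI)
    fix x assume xO: "x \<in> \<Omega>"
    have D: "R^2 < norm (x-x0)^2" using far[OF xO] R_pos by (simp add: power_strict_mono)
    then have Dp: "R / (norm (x-x0)^2 - R^2) > 0" using R_pos by simp
    then have "(R / (norm (x-x0)^2 - R^2)) powr ((real CARD('n) - 2)/2) > 0" by (simp only: powr_gt_zero)
    then show "u_out \<alpha> R x0 x > 0" using alpha_pos by (simp add: u_out_def)
    show "ereal (u_out \<alpha> R x0 x) \<le> w x"
    proof (cases "w x")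
      case PInf then show ?thesis by simp
    next
      case MInf then show ?thesis using ninf xO by simp
    next
      case (real W)
      define g where "g = (\<lambda>\<rho>. \<alpha> * (\<rho> / (norm(x-x0)^2 - \<rho>^2)) powr ((real CARD('n) - 2)/2))"
      have gR: "g R = u_out \<alpha> R x0 x" by (simp add: g_def u_out_def)
      have cont: "isCont g R"
        unfolding g_def using D Dp by (intro continuous_intros) auto
      have lim: "(g \<longlongrightarrow> g R) (at_left R)"
        by (rule tendsto_mono[OF at_le[OF subset_UNIV]]) (use cont in \<open>simp add: isCont_def\<close>)
      have evg: "eventually (\<lambda>\<rho>. g \<rho> \<le> W) (at_left R)"
        using eventually_at_left_real[OF R_pos]
      proof (rule eventually_mono)
        fix \<rho> assume "\<rho> \<in> {0<..<R}"
        then have "ereal (u_out \<alpha> \<rho> x0 x) \<le> w x" using key xO by auto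
        then show "g \<rho> \<le> W" using real by (simp add: g_def u_out_def)
      qed
      have "g R \<le> W" by (rule tendsto_le[OF trivial_limit_at_left_real tendsto_const lim evg])
      then show ?thesis using real gR by simp
    qed
  qed
qed

end
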